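(* Let $w_1,w_2\ge2$ be even. Then $E_{w_1,w_2}^{\mathbb Q}\subset W_{w_1,w_2}^{\mathbb Q}$, the map $\Phi_S:W_{w_1,w_2}^{\mathbb Q}\to (W_{w_1}^{\mathbb Q}/E_{w_1}^{\mathbb Q})\otimes(W_{w_2}^{\mathbb Q}/E_{w_2}^{\mathbb Q})$, $P\mapsto$ the class of $[(1,1)+(S,S)].P$, is well defined (i.e. $[(1,1)+(S,S)].P\in W_{w_1}^{\mathbb Q}\otimes W_{w_2}^{\mathbb Q}$ for $P\in W_{w_1,w_2}^{\mathbb Q}$), and its kernel is exactly $E_{w_1,w_2}^{\mathbb Q}$. That is, the sequence $0\to E_{w_1,w_2}^{\mathbb Q}\to W_{w_1,w_2}^{\mathbb Q}\xrightarrow{\Phi_S}(W_{w_1}^{\mathbb Q}/E_{w_1}^{\mathbb Q})\otimes(W_{w_2}^{\mathbb Q}/E_{w_2}^{\mathbb Q})$ is exact.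
   Context: $\Gamma=PSL_2(\mathbb Z)$, $S=\pm\begin{pmatrix}0&-1\\1&0\end{pmatrix}$, $U=\pm\begin{pmatrix}0&1\\-1&1\end{pmatrix}$. For even $w$, $V_w^{\mathbb Q}$ = rational polynomials in $X$ of degree $\le w$ with action $\gamma.P(X)=(-cX+a)^wP\big(\frac{dX-b}{-cX+a}\big)$ for $\gamma=\pm\begin{pmatrix}a&b\\c&d\end{pmatrix}$; $\mathcal I_1=\langle1+S,1+U+U^2\rangle\subset\mathbb Z[\Gamma]$ (left ideal); $W_w^{\mathbb Q}=\{P\in V_w^{\mathbb Q}:g.P=0\ \forall g\in\mathcal I_1\}$; $E_w^{\mathbb Q}=\mathbb Q(1-X^w)$. $V_{w_1,w_2}^{\mathbb Q}=V_{w_1}^{\mathbb Q}\otimes V_{w_2}^{\mathbb Q}$ (polynomials in $X_1,X_2$) with the diagonal $\Gamma^2$-action $(\gamma_1,\gamma_2).P(X_1,X_2)=(-c_1X_1+a_1)^{w_1}(-c_2X_2+a_2)^{w_2}P\big(\frac{d_1X_1-b_1}{-c_1X_1+a_1},\frac{d_2X_2-b_2}{-c_2X_2+a_2}\big)$. Identify $\mathbb Z[\Gamma^2]=\mathbb Z[\Gamma]\otimes\mathbb Z[\Gamma]$ writing $(a,b)=a\otimes b$. $\mathcal I_2$ is the left ideal generated by $(1+S,1+S)$, $(S,S)+(S,US)+(US,US)+(1,U)-(U^2,U^2)$, $(1+U+U^2,1)[(1,1)+(S,S)]$, $(1,1+U+U^2)[(1,1)+(S,S)]$; $W_{w_1,w_2}^{\mathbb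 Q}=\{P:g.P=0\ \forall g\in\mathcal I_2\}$. $V_{w_1,w_2}^{\mathbb Q}[I_D]=\{P:[(1,1)+(S,S)].P=[(1,1)+(U,U)+(U^2,U^2)].P=0\}$ and $E_{w_1,w_2}^{\mathbb Q}=(W_{w_1}^{\mathbb Q}\otimes1)+V_{w_1,w_2}^{\mathbb Q}[I_D]+(X_1^{w_1}\otimes W_{w_2}^{\mathbb Q})$, where $W_{w_1}^{\mathbb Q}\otimes1=\{P(X_1):P\in W_{w_1}^{\mathbb Q}\}$ and $X_1^{w_1}\otimes W_{w_2}^{\mathbb Q}=\{X_1^{w_1}Q(X_2):Q\in W_{w_2}^{\mathbb Q}\}$. *)

theory Defs
  imports "HOL-Computational_Algebra.Polynomial"
begin

text \<open>An integer 2x2 matrix (a,b,c,d) stands for ((a,b),(c,d)). Elements of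
  PSL_2(Z) are represented by matrices of determinant 1; since all weights are
  even, the sign ambiguity does not affect any action used below.\<close>

type_synonym mat2 = "int \<times> int \<times> int \<times> int"

definition SL2 :: "mat2 set" where
  "SL2 = {(a,b,c,d). a*d - b*c = 1}"

fun mmul :: "mat2 \<Rightarrow> mat2 \<Rightarrow> mat2" where
  "mmul (a,b,c,d) (a',b',c',d') = (a*a' + b*c', a*b' + b*d', c*a' + d*c', c*b' + d*d')"

definition mI :: mat2 where "mI = (1,0,0,1)"
definition mS :: mat2 where "mS = (0,-1,1,0)"
definition mU :: mat2 where "mU = (0,1,-1,1)"

fun img :: "nat \<Rightarrow> mat2 \<Rightarrow> nat \<Rightarrow> rat poly" where
  "img w (a,b,c,d) i = [:of_int (-b), of_int d:] ^ i * [:of_int a, of_int (-c):] ^ (w - i)"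

definition act1 :: "nat \<Rightarrow> mat2 \<Rightarrow> rat poly \<Rightarrow> rat poly" where
  "act1 w g P = (\<Sum>i\<le>w. smult (coeff P i) (img w g i))"

definition inV1 :: "nat \<Rightarrow> rat poly \<Rightarrow> bool" where
  "inV1 w P \<longleftrightarrow> degree P \<le> w"

type_synonym zg = "(int \<times> mat2) list"

definition zg_ok :: "zg \<Rightarrow> bool" where
  "zg_ok x \<longleftrightarrow> (\<forall>(n,g)\<in>set x. g \<in> SL2)"

definition zg_mult :: "zg \<Rightarrow> zg \<Rightarrow> zg" where
  "zg_mult x y = concat (map (\<lambda>(m,g). map (\<lambda>(n,h). (m*n, mmul g h)) y) x)"

definition zg_act :: "nat \<Rightarrow> zg \<Rightarrow> rat poly \<Rightarrow> rat poly" where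
  "zg_act w x P = sum_list (map (\<lambda>(n,g). smult (of_int n) (act1 w g P)) x)"

definition lideal1 :: "zg list \<Rightarrow> zg set" where
  "lideal1 gens = {concat (map2 zg_mult xs gens) | xs. length xs = length gens \<and> (\<forall>x\<in>set xs. zg_ok x)}"

definition I1 :: "zg set" where
  "I1 = lideal1 [[(1,mI),(1,mS)], [(1,mI),(1,mU),(1,mmul mU mU)]]"

definition W1 :: "nat \<Rightarrow> rat poly set" where
  "W1 w = {P. inV1 w P \<and> (\<forall>g\<in>I1. zg_act w g P = 0)}"

definition E1 :: "nat \<Rightarrow> rat poly set" where
  "E1 w = {smult c (1 - monom 1 w) | c. True}"

section \<open>Two variables: V_{w1,w2} as rat poly poly (outer variable X1, inner X2)\<close>

definition tens :: "rat poly \<Rightarrow> rat poly \<Rightarrow> rat poly poly" where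
  "tens f g = map_poly (\<lambda>c. smult c g) f"

definition inV2 :: "nat \<Rightarrow> nat \<Rightarrow> rat poly poly \<Rightarrow> bool" where
  "inV2 w1 w2 P \<longleftrightarrow> degree P \<le> w1 \<and> (\<forall>i. degree (coeff P i) \<le> w2)"

definition act2 :: "nat \<Rightarrow> nat \<Rightarrow> mat2 \<times> mat2 \<Rightarrow> rat poly poly \<Rightarrow> rat poly poly" where
  "act2 w1 w2 gh P = (\<Sum>i\<le>w1. \<Sum>j\<le>w2.
      smult [:coeff (coeff P i) j:] (tens (img w1 (fst gh) i) (img w2 (snd gh) j)))"

type_synonym zg2 = "(int \<times> mat2 \<times> mat2) list"

definition zg2_ok :: "zg2 \<Rightarrow> bool" where
  "zg2_ok x \<longleftrightarrow> (\<forall>(n,g,h)\<in>set x. g \<in> SL2 \<and> h \<in> SL2)"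

definition zg2_mult :: "zg2 \<Rightarrow> zg2 \<Rightarrow> zg2" where
  "zg2_mult x y = concat (map (\<lambda>(m,g,g'). map (\<lambda>(n,h,h'). (m*n, mmul g h, mmul g' h')) y) x)"

text \<open>The identification Z[Gamma^2] = Z[Gamma] (x) Z[Gamma], (a,b) = a (x) b.\<close>
definition zg_tens :: "zg \<Rightarrow> zg \<Rightarrow> zg2" where
  "zg_tens x y = concat (map (\<lambda>(m,g). map (\<lambda>(n,h). (m*n, g, h)) y) x)"

definition zg2_act :: "nat \<Rightarrow> nat \<Rightarrow> zg2 \<Rightarrow> rat poly poly \<Rightarrow> rat poly poly" where
  "zg2_act w1 w2 x P = sum_list (map (\<lambda>(n,g,h). smult [:of_int n:] (act2 w1 w2 (g,h) P)) x)"

definition lideal2 :: "zg2 list \<Rightarrow> zg2 set" where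
  "lideal2 gens = {concat (map2 zg2_mult xs gens) | xs. length xs = length gens \<and> (\<forall>x\<in>set xs. zg2_ok x)}"

definition DS :: zg2 where "DS = [(1,mI,mI),(1,mS,mS)]"
definition DU :: zg2 where "DU = [(1,mI,mI),(1,mU,mU),(1,mmul mU mU,mmul mU mU)]"

definition I2 :: "zg2 set" where
  "I2 = lideal2
    [ zg_tens [(1,mI),(1,mS)] [(1,mI),(1,mS)],
      [(1,mS,mS),(1,mS,mmul mU mS),(1,mmul mU mS,mmul mU mS),(1,mI,mU),(-1,mmul mU mU,mmul mU mU)],
      zg2_mult (zg_tens [(1,mI),(1,mU),(1,mmul mU mU)] [(1,mI)]) DS,
      zg2_mult (zg_tens [(1,mI)] [(1,mI),(1,mU),(1,mmul mU mU)]) DS ]"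

definition W2 :: "nat \<Rightarrow> nat \<Rightarrow> rat poly poly set" where
  "W2 w1 w2 = {P. inV2 w1 w2 P \<and> (\<forall>g\<in>I2. zg2_act w1 w2 g P = 0)}"

definition VID :: "nat \<Rightarrow> nat \<Rightarrow> rat poly poly set" where
  "VID w1 w2 = {P. inV2 w1 w2 P \<and> zg2_act w1 w2 DS P = 0 \<and> zg2_act w1 w2 DU P = 0}"

definition E2 :: "nat \<Rightarrow> nat \<Rightarrow> rat poly poly set" where
  "E2 w1 w2 = {map_poly (\<lambda>c. [:c:]) P + Q + monom R w1 | P Q R.
       P \<in> W1 w1 \<and> Q \<in> VID w1 w2 \<and> R \<in> W1 w2}"

text \<open>A (x) B inside V_{w1,w2}: the span of the pure tensors f(X1) g(X2), f in A, g in B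
  (A, B are subspaces, so finite sums of pure tensors suffice).\<close>
definition tspan :: "rat poly set \<Rightarrow> rat poly set \<Rightarrow> rat poly poly set" where
  "tspan A B = {sum_list (map (\<lambda>(f,g). tens f g) l) | l. set l \<subseteq> A \<times> B}"

text \<open>Kernel of the natural map W_{w1} (x) W_{w2} -> (W_{w1}/E_{w1}) (x) (W_{w2}/E_{w2}),
  namely E_{w1} (x) W_{w2} + W_{w1} (x) E_{w2}.\<close>
definition Kq :: "nat \<Rightarrow> nat \<Rightarrow> rat poly poly set" where
  "Kq w1 w2 = {x + y | x y. x \<in> tspan (E1 w1) (W1 w2) \<and> y \<in> tspan (W1 w1) (E1 w2)}"

end

theory Submission
  imports Defs
begin


interpretation rpv: vector_space "smult :: rat \<Rightarrow> rat poly \<Rightarrow> rat poly"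
  by unfold_locales (auto simp: smult_add_right smult_add_left)

interpretation rpv2: vector_space_pair "smult :: rat \<Rightarrow> rat poly \<Rightarrow> rat poly" "smult :: rat \<Rightarrow> rat poly \<Rightarrow> rat poly"
  by unfold_locales

lemma proj_exists:
  fixes W :: "rat poly set"
  assumes "0 \<in> W" "\<And>x y. x \<in> W \<Longrightarrow> y \<in> W \<Longrightarrow> x + y \<in> W" "\<And>c x. x \<in> W \<Longrightarrow> smult c x \<in> W"
  shows "\<exists>\<pi>. (\<forall>x y. \<pi> (x + y) = \<pi> x + \<pi> y) \<and> (\<forall>c x. \<pi> (smult c x) = smult c (\<pi> x)) \<and> (\<forall>x. \<pi> x \<in> W) \<and> (\<forall>x\<in>W. \<pi> x = x)"
proof -
  have sub: "rpv.subspace W" unfolding rpv.subspace_def using assms by auto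
  obtain B where B: "B \<subseteq> W" "rpv.independent B" "W \<subseteq> rpv.span B"
    using rpv.maximal_independent_subset by blast
  define C where "C = rpv.extend_basis B"
  have C: "B \<subseteq> C" "rpv.independent C" "rpv.span C = UNIV"
    using B(2) unfolding C_def using rpv.extend_basis_superset rpv.independent_extend_basis rpv.span_extend_basis by auto
  obtain g where g: "Vector_Spaces.linear (smult::rat \<Rightarrow> rat poly \<Rightarrow> rat poly) smult g" "\<forall>x\<in>C. g x = (if x \<in> B then x else 0)"
    using rpv2.linear_independent_extend[OF C(2), of "\<lambda>x. if x \<in> B then x else 0"] by blast
  have spanW: "rpv.span W = W" using sub rpv.span_eq_iff by blast
  have gW: "g x \<in> W" for x
  proof -
    have "x \<in> rpv.span C" using C by auto
    hence "g x \<in> rpv.span (g ` C)" using g(1) by (metis rpv2.linear_span_image image_eqI)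
    moreover have "g ` C \<subseteq> W" using g(2) B(1) assms(1) by auto
    ultimately show ?thesis using spanW rpv.span_mono by blast
  qed
  have gid: "g x = x" if "x \<in> W" for x
  proof -
    have "x \<in> rpv.span B" using that B by auto
    thus ?thesis using rpv2.linear_eq_on_span[OF g(1) rpv.linear_ident, of B x] g(2) C(1) by (metis subsetD)
  qed
  show ?thesis
    apply (rule exI[of _ g])
    using g(1) gW gid rpv2.linear_add[OF g(1)] rpv2.linear_scale[OF g(1)] by auto
qed


definition hom :: "nat \<Rightarrow> rat poly \<Rightarrow> rat \<Rightarrow> rat \<Rightarrow> rat" where
  "hom n p x y = (\<Sum>i\<le>n. coeff p i * x^i * y^(n-i))"

lemma hom_y:
  assumes "y \<noteq> 0" "degree p \<le> n"
  shows "hom n p x y = y^n * poly p (x/y)"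
proof -
  have "poly p (x/y) = (\<Sum>i\<le>n. coeff p i * (x/y)^i)"
    unfolding poly_altdef
    by (rule sum.mono_neutral_left) (use assms in \<open>auto simp: coeff_eq_0\<close>)
  hence "y^n * poly p (x/y) = (\<Sum>i\<le>n. coeff p i * (y^n * (x/y)^i))"
    by (simp add: sum_distrib_left algebra_simps)
  also have "\<dots> = (\<Sum>i\<le>n. coeff p i * x^i * y^(n-i))"
  proof (rule sum.cong[OF refl])
    fix i assume "i \<in> {..n}"
    hence "y^n = y^i * y^(n-i)" by (simp add: power_add[symmetric])
    thus "coeff p i * (y^n * (x/y)^i) = coeff p i * x^i * y^(n-i)"
      using assms(1) by (simp add: power_divide field_simps)
  qed
  finally show ?thesis unfolding hom_def by simp
qed

lemma hom_0: "hom n p x 0 = coeff p n * x^n"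
proof -
  have "hom n p x 0 = (\<Sum>i\<in>{n}. coeff p i * x^i * 0^(n-i))"
    unfolding hom_def by (rule sum.mono_neutral_right) auto
  thus ?thesis by simp
qed

lemma coeff_mult_top:
  fixes p q :: "'a::comm_ring_1 poly"
  assumes "degree p \<le> m" "degree q \<le> k"
  shows "coeff (p*q) (m+k) = coeff p m * coeff q k"
proof -
  have "coeff (p*q) (m+k) = (\<Sum>i\<le>m+k. coeff p i * coeff q (m+k-i))" by (simp add: coeff_mult)
  also have "\<dots> = (\<Sum>i\<in>{m}. coeff p i * coeff q (m+k-i))"
  proof (rule sum.mono_neutral_right)
    show "\<forall>i\<in>{..m + k} - {m}. coeff p i * coeff q (m + k - i) = 0"
    proof
      fix i assume "i \<in> {..m + k} - {m}"
      hence "i < m \<or> i > m" by auto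
      thus "coeff p i * coeff q (m + k - i) = 0"
        using assms by (auto simp: coeff_eq_0)
    qed
  qed auto
  finally show ?thesis by simp
qed

lemma degree_lin_pow: "degree ([:u,v:]^i) \<le> i"
  by (rule order.trans[OF degree_power_le]) (auto intro: order.trans[OF degree_pCons_le])

lemma coeff_lin_pow: "coeff (([:u,v:]::'a::comm_ring_1 poly)^i) i = v^i"
proof (induction i)
  case (Suc i)
  have "coeff ([:u,v:]^i * [:u,v:]) (i + 1) = coeff ([:u,v:]^i) i * coeff [:u,v:] 1"
    by (rule coeff_mult_top) (auto intro: degree_lin_pow order.trans[OF degree_pCons_le])
  thus ?case using Suc by (simp add: power_Suc2 mult.commute)
qed simp

lemma degree_img: "i \<le> w \<Longrightarrow> degree (img w g i) \<le> w"
proof (cases g)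
  case (fields a b c d)
  assume "i \<le> w"
  have "degree (img w g i) \<le> i + (w - i)" unfolding fields img.simps
    by (rule order.trans[OF degree_mult_le]) (intro add_mono degree_lin_pow)
  thus ?thesis using \<open>i \<le> w\<close> by simp
qed

lemma hom_img:
  assumes "i \<le> w"
  shows "hom w (img w (a,b,c,d) i) x y = (of_int d * x - of_int b * y)^i * (of_int a * y - of_int c * x)^(w-i)"
proof (cases "y = 0")
  case True
  have "coeff (img w (a,b,c,d) i) (i + (w-i)) = of_int d ^ i * (- of_int c)^(w-i)"
    unfolding img.simps by (subst coeff_mult_top) (auto simp: coeff_lin_pow degree_lin_pow)
  moreover have "i + (w-i) = w" using assms by simp
  moreover have "x^w = x^i * x^(w-i)" using assms by (simp add: power_add[symmetric])
  moreover have "(- (x * of_int c))^(w-i) = x^(w-i) * (- of_int c)^(w-i)"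
    by (simp add: power_mult_distrib[symmetric])
  ultimately show ?thesis using True assms
    by (simp add: hom_0 power_mult_distrib mult_ac)
next
  case False
  have "hom w (img w (a,b,c,d) i) x y = y^w * poly (img w (a,b,c,d) i) (x/y)"
    by (rule hom_y[OF False degree_img[OF assms]])
  also have "y^w = y^i * y^(w-i)" using assms by (simp add: power_add[symmetric])
  finally show ?thesis using False
    by (simp add: power_mult_distrib[symmetric] field_simps)
qed

lemma hom_add: "hom n (p + q) x y = hom n p x y + hom n q x y"
  unfolding hom_def by (simp add: sum.distrib algebra_simps)
lemma hom_smult: "hom n (smult c p) x y = c * hom n p x y"
  unfolding hom_def by (simp add: sum_distrib_left algebra_simps)
lemma hom_zero[simp]: "hom n 0 x y = 0"
  unfolding hom_def by simp
lemma hom_sum: "hom n (\<Sum>i\<in>A. f i) x y = (\<Sum>i\<in>A. hom n (f i) x y)"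
  by (induction A rule: infinite_finite_induct) (auto simp: hom_add)

lemma hom_act1:
  "hom w (act1 w (a,b,c,d) P) x y = hom w P (of_int d * x - of_int b * y) (of_int a * y - of_int c * x)"
  unfolding act1_def hom_sum hom_smult
  by (subst hom_def, rule sum.cong[OF refl]) (simp del: img.simps add: hom_img mult_ac)

lemma degree_act1: "degree (act1 w g P) \<le> w"
  unfolding act1_def
  by (rule degree_sum_le) (auto intro: order.trans[OF degree_smult_le] degree_img)

lemma poly_hom: "degree p \<le> n \<Longrightarrow> poly p x = hom n p x 1"
  using hom_y[of 1 p n x] by simp

lemma act1_comp: "act1 w g (act1 w h P) = act1 w (mmul g h) P"
proof -
  obtain a b c d where g: "g = (a,b,c,d)" by (cases g)
  obtain a' b' c' d' where h: "h = (a',b',c',d')" by (cases h)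
  have "poly (act1 w g (act1 w h P)) x = poly (act1 w (mmul g h) P) x" for x
    unfolding poly_hom[OF degree_act1] g h mmul.simps hom_act1
    by (simp add: algebra_simps)
  thus ?thesis by (intro iffD1[OF poly_eq_poly_eq_iff] ext)
qed



lemma smult_sum_right: "smult c (\<Sum>i\<in>A. f i) = (\<Sum>i\<in>A. smult c (f i))"
  by (induction A rule: infinite_finite_induct) (auto simp: smult_add_right)

lemma act1_add: "act1 w g (P + Q) = act1 w g P + act1 w g Q"
  unfolding act1_def by (simp add: smult_add_left sum.distrib)
lemma act1_smult: "act1 w g (smult c P) = smult c (act1 w g P)"
  unfolding act1_def by (simp add: smult_sum_right)
lemma act1_zero[simp]: "act1 w g 0 = 0"
  unfolding act1_def by simp
lemma act1_minus: "act1 w g (- P) = - act1 w g P"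
  using act1_smult[of w g "-1" P] by simp
lemma act1_diff: "act1 w g (P - Q) = act1 w g P - act1 w g Q"
  using act1_add[of w g P "-Q"] by (simp add: act1_minus)
lemma act1_sum: "act1 w g (\<Sum>i\<in>A. f i) = (\<Sum>i\<in>A. act1 w g (f i))"
  by (induction A rule: infinite_finite_induct) (auto simp: act1_add)
lemma act1_sum_list: "act1 w g (sum_list (map f xs)) = sum_list (map (\<lambda>x. act1 w g (f x)) xs)"
  by (induction xs) (auto simp: act1_add)

lemma act1_monom: "k \<le> w \<Longrightarrow> act1 w g (monom c k) = smult c (img w g k)"
proof -
  assume k: "k \<le> w"
  have "act1 w g (monom c k) = (\<Sum>i\<in>{k}. smult (coeff (monom c k) i) (img w g i))"
    unfolding act1_def by (rule sum.mono_neutral_right) (use k in auto)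
  thus ?thesis by simp
qed

lemma act1_one: "act1 w g 1 = img w g 0"
  using act1_monom[of 0 w g 1] by (simp add: one_pCons monom_0)

lemma act1_mI: "degree P \<le> w \<Longrightarrow> act1 w mI P = P"
  by (intro iffD1[OF poly_eq_poly_eq_iff] ext)
     (simp add: poly_hom[OF degree_act1] poly_hom mI_def hom_act1 del: img.simps)

lemma hom_neg: "even n \<Longrightarrow> hom n p (-x) (-y) = hom n p x y"
  unfolding hom_def
proof (rule sum.cong[OF refl])
  fix i assume "even n" "i \<in> {..n}"
  hence "(-1::rat)^i * (-1)^(n-i) = 1"
    by (simp add: power_add[symmetric])
  thus "coeff p i * (- x) ^ i * (- y) ^ (n - i) = coeff p i * x ^ i * y ^ (n - i)"
  proof -
    have "(-x)^i * (-y)^(n-i) = ((-1)^i * (-1)^(n-i)) * (x^i * y^(n-i))"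
      by (simp add: power_minus[of x] power_minus[of y] algebra_simps)
    thus ?thesis using \<open>(-1::rat)^i * (-1)^(n-i) = 1\<close> by (simp add: mult.assoc)
  qed
qed

lemma act1_negI: "even w \<Longrightarrow> act1 w (-1,0,0,-1) P = act1 w mI P"
  by (intro iffD1[OF poly_eq_poly_eq_iff] ext)
     (simp add: poly_hom[OF degree_act1] mI_def hom_act1 hom_neg[of w P "-x" "-1" for x, simplified] del: img.simps)

lemma mmul_I1[simp]: "mmul mI h = h" by (cases h) (simp add: mI_def)
lemma mmul_I2[simp]: "mmul h mI = h" by (cases h) (simp add: mI_def)

lemma zg_act_Nil[simp]: "zg_act w [] P = 0" unfolding zg_act_def by simp
lemma zg_act_Cons[simp]: "zg_act w ((n,g)#x) P = smult (of_int n) (act1 w g P) + zg_act w x P"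
  unfolding zg_act_def by simp
lemma zg_act_append[simp]: "zg_act w (x @ y) P = zg_act w x P + zg_act w y P"
  unfolding zg_act_def by simp
lemma zg_act_add: "zg_act w x (P + Q) = zg_act w x P + zg_act w x Q"
  by (induction x) (auto simp: act1_add smult_add_right)
lemma zg_act_zero[simp]: "zg_act w x 0 = 0"
  by (induction x) auto
lemma zg_act_smult: "zg_act w x (smult c P) = smult c (zg_act w x P)"
  by (induction x) (auto simp: act1_smult smult_add_right)

lemma zg_act_map: "zg_act w (map (\<lambda>(n,h). (m*n, mmul g h)) y) P = smult (of_int m) (act1 w g (zg_act w y P))"
  by (induction y) (auto simp: act1_add act1_smult act1_comp smult_add_right)

lemma zg_act_mult: "zg_act w (zg_mult x y) P = zg_act w x (zg_act w y P)"
  unfolding zg_mult_def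
  by (induction x) (auto simp: zg_act_map)

lemma degree_zg_act: "degree (zg_act w x P) \<le> w"
  by (induction x) (auto intro!: degree_add_le order.trans[OF degree_smult_le] degree_act1)

lemma lideal1_kill:
  assumes "\<forall>gen\<in>set gens. zg_act w gen P = 0" "length xs = length gens"
  shows "zg_act w (concat (map2 zg_mult xs gens)) P = 0"
  using assms
proof (induction xs arbitrary: gens)
  case (Cons x xs)
  then obtain g gs where "gens = g # gs" by (cases gens) auto
  with Cons show ?case by (auto simp: zg_act_mult)
qed simp

lemma mI_SL2: "mI \<in> SL2" by (simp add: mI_def SL2_def)

lemma W1_iff: "P \<in> W1 w \<longleftrightarrow> degree P \<le> w \<and> act1 w mS P = - P \<and> P + act1 w mU P + act1 w (mmul mU mU) P = 0"
proof -
  define g1 where "g1 = [(1::int,mI),(1,mS)]"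
  define g2 where "g2 = [(1::int,mI),(1,mU),(1,mmul mU mU)]"
  have I1: "I1 = lideal1 [g1, g2]" unfolding I1_def g1_def g2_def ..
  have e1: "zg_act w g1 P = act1 w mI P + act1 w mS P" unfolding g1_def by simp
  have e2: "zg_act w g2 P = act1 w mI P + act1 w mU P + act1 w (mmul mU mU) P" unfolding g2_def by (simp add: add.assoc)
  have u: "zg_act w (zg_mult [(1,mI)] x) P = zg_act w x P" for x
    unfolding zg_act_mult by (simp add: act1_mI degree_zg_act)
  have ok: "zg_ok [(1,mI)]" "zg_ok []" by (auto simp: zg_ok_def mI_SL2)
  have m1: "concat (map2 zg_mult [[(1,mI)],[]] [g1,g2]) \<in> I1"
    unfolding I1 lideal1_def by (intro CollectI exI[where x="[[(1,mI)],[]]"]) (auto simp: ok)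
  have m2: "concat (map2 zg_mult [[],[(1,mI)]] [g1,g2]) \<in> I1"
    unfolding I1 lideal1_def by (intro CollectI exI[where x="[[],[(1,mI)]]"]) (auto simp: ok)
  show ?thesis
  proof
    assume P: "P \<in> W1 w"
    hence d: "degree P \<le> w" unfolding W1_def inV1_def by auto
    have "zg_act w g1 P = 0" "zg_act w g2 P = 0"
      using P m1 m2 unfolding W1_def by (auto simp: u zg_mult_def)
    thus "degree P \<le> w \<and> act1 w mS P = - P \<and> P + act1 w mU P + act1 w (mmul mU mU) P = 0"
      using d e1 e2 by (simp add: act1_mI eq_neg_iff_add_eq_0)
  next
    assume H: "degree P \<le> w \<and> act1 w mS P = - P \<and> P + act1 w mU P + act1 w (mmul mU mU) P = 0"
    hence "zg_act w g1 P = 0" "zg_act w g2 P = 0" using e1 e2 by (auto simp: act1_mI)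
    hence "zg_act w g P = 0" if "g \<in> I1" for g
      using that unfolding I1 lideal1_def by (auto intro!: lideal1_kill)
    thus "P \<in> W1 w" using H unfolding W1_def inV1_def by auto
  qed
qed



lemma degree_map_poly_le: "f 0 = 0 \<Longrightarrow> degree (map_poly f p) \<le> degree p"
  by (rule degree_le) (simp add: coeff_map_poly coeff_eq_0)

lemma smult_m1: "smult [:-1:] (P::'a::comm_ring_1 poly poly) = - P"
  by (rule poly_eqI) simp

lemma coeff_tens: "coeff (tens f q) i = smult (coeff f i) q"
  unfolding tens_def by (simp add: coeff_map_poly)
lemma tens_add1: "tens (f + f') q = tens f q + tens f' q"
  by (rule poly_eqI) (simp add: coeff_tens smult_add_left)
lemma tens_add2: "tens f (q + q') = tens f q + tens f q'"
  by (rule poly_eqI) (simp add: coeff_tens smult_add_right)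
lemma tens_zero1[simp]: "tens 0 q = 0"
  by (rule poly_eqI) (simp add: coeff_tens)
lemma tens_zero2[simp]: "tens f 0 = 0"
  by (rule poly_eqI) (simp add: coeff_tens)
lemma tens_smult1: "tens (smult c f) q = tens f (smult c q)"
  by (rule poly_eqI) (simp add: coeff_tens)
lemma tens_smult2: "smult [:c:] (tens f q) = tens f (smult c q)"
  by (rule poly_eqI) (simp add: coeff_tens)
lemma tens_minus1: "tens (- f) q = - tens f q"
  by (rule poly_eqI) (simp add: coeff_tens)
lemma tens_minus2: "tens f (- q) = - tens f q"
  by (rule poly_eqI) (simp add: coeff_tens)
lemma tens_diff1: "tens (f - f') q = tens f q - tens f' q"
  by (rule poly_eqI) (simp add: coeff_tens smult_diff_left)
lemma tens_diff2: "tens f (q - q') = tens f q - tens f q'"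
  by (rule poly_eqI) (simp add: coeff_tens smult_diff_right)
lemma tens_sum1: "tens (\<Sum>i\<in>A. f i) q = (\<Sum>i\<in>A. tens (f i) q)"
  by (induction A rule: infinite_finite_induct) (auto simp: tens_add1)
lemma tens_sum2: "tens f (\<Sum>i\<in>A. q i) = (\<Sum>i\<in>A. tens f (q i))"
  by (induction A rule: infinite_finite_induct) (auto simp: tens_add2)
lemma degree_tens: "degree (tens f q) \<le> degree f"
  unfolding tens_def by (rule degree_map_poly_le) simp
lemma degree_coeff_tens: "degree q \<le> n \<Longrightarrow> degree (coeff (tens f q) i) \<le> n"
  by (simp add: coeff_tens)

definition Ag :: "nat \<Rightarrow> mat2 \<Rightarrow> rat poly poly \<Rightarrow> rat poly poly" where
  "Ag w g Q = (\<Sum>i\<le>w. tens (img w g i) (coeff Q i))"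

definition rowp :: "nat \<Rightarrow> rat poly poly \<Rightarrow> nat \<Rightarrow> rat poly" where
  "rowp w Q j = (\<Sum>i\<le>w. monom (coeff (coeff Q i) j) i)"

lemma coeff_rowp: "coeff (rowp w Q j) i = (if i \<le> w then coeff (coeff Q i) j else 0)"
  unfolding rowp_def coeff_sum coeff_monom by (simp add: sum.delta)

lemma degree_rowp: "degree (rowp w Q j) \<le> w"
  by (rule degree_le) (simp add: coeff_rowp)

lemma coeff_Ag: "coeff (Ag w g Q) k = (\<Sum>i\<le>w. smult (coeff (img w g i) k) (coeff Q i))"
  unfolding Ag_def coeff_sum coeff_tens ..

lemma degree_Ag: "degree (Ag w g Q) \<le> w"
  unfolding Ag_def
  by (rule degree_sum_le) (auto intro: order.trans[OF degree_tens] degree_img)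

lemma rowp_Ag: "rowp w (Ag w g R) j = act1 w g (rowp w R j)"
proof (rule poly_eqI)
  fix k
  have "coeff (act1 w g (rowp w R j)) k = (\<Sum>i\<le>w. coeff (coeff R i) j * coeff (img w g i) k)"
    unfolding act1_def coeff_sum by (simp add: coeff_rowp)
  moreover have "k > w \<Longrightarrow> (\<Sum>i\<le>w. coeff (coeff R i) j * coeff (img w g i) k) = 0"
    by (auto intro!: sum.neutral coeff_eq_0 order.strict_trans1[OF degree_img])
  ultimately show "coeff (rowp w (Ag w g R) j) k = coeff (act1 w g (rowp w R j)) k"
    by (auto simp: coeff_rowp coeff_Ag coeff_sum mult.commute)
qed

lemma rows_eq:
  assumes "degree Q \<le> w" "degree Q' \<le> w" "\<And>j. rowp w Q j = rowp w Q' j"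
  shows "Q = Q'"
proof (rule poly_eqI, rule poly_eqI)
  fix i j
  show "coeff (coeff Q i) j = coeff (coeff Q' i) j"
  proof (cases "i \<le> w")
    case True
    then show ?thesis using arg_cong[OF assms(3)[of j], of "\<lambda>p. coeff p i"] by (simp add: coeff_rowp)
  next
    case False
    then show ?thesis using assms(1,2) by (simp add: coeff_eq_0)
  qed
qed

lemma Ag_comp: "Ag w g (Ag w g' R) = Ag w (mmul g g') R"
  by (rule rows_eq[OF degree_Ag degree_Ag]) (simp add: rowp_Ag act1_comp)

lemma Ag_mI: "degree R \<le> w \<Longrightarrow> Ag w mI R = R"
  by (rule rows_eq[OF degree_Ag]) (auto simp: rowp_Ag act1_mI degree_rowp)

lemma Ag_negI: "even w \<Longrightarrow> Ag w (-1,0,0,-1) R = Ag w mI R"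
  by (rule rows_eq[OF degree_Ag degree_Ag]) (simp add: rowp_Ag act1_negI del: img.simps)

lemma map_act1_Ag: "map_poly (act1 w2 h) (Ag w1 g R) = Ag w1 g (map_poly (act1 w2 h) R)"
  by (rule poly_eqI) (simp add: coeff_map_poly coeff_Ag act1_sum act1_smult)

lemma map_act1_comp: "map_poly (act1 w h) (map_poly (act1 w h') R) = map_poly (act1 w (mmul h h')) R"
  by (simp add: map_poly_map_poly comp_def act1_comp)

lemma act2_fact: "act2 w1 w2 (g,h) P = Ag w1 g (map_poly (act1 w2 h) P)"
  unfolding act2_def Ag_def
proof (rule sum.cong[OF refl])
  fix i
  have "tens (img w1 g i) (coeff (map_poly (act1 w2 h) P) i)
      = tens (img w1 g i) (\<Sum>j\<le>w2. smult (coeff (coeff P i) j) (img w2 h j))"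
    by (simp add: coeff_map_poly act1_def)
  also have "\<dots> = (\<Sum>j\<le>w2. smult [:coeff (coeff P i) j:] (tens (img w1 g i) (img w2 h j)))"
    by (simp add: tens_sum2 tens_smult2)
  finally show "(\<Sum>j\<le>w2. smult [:coeff (coeff P i) j:] (tens (img w1 (fst (g, h)) i) (img w2 (snd (g, h)) j))) =
         tens (img w1 g i) (coeff (map_poly (act1 w2 h) P) i)" by simp
qed

lemma act2_comp: "act2 w1 w2 (g,h) (act2 w1 w2 (g',h') P) = act2 w1 w2 (mmul g g', mmul h h') P"
  unfolding act2_fact map_act1_Ag Ag_comp map_act1_comp ..

lemma act2_tens: "act2 w1 w2 (g,h) (tens f q) = tens (act1 w1 g f) (act1 w2 h q)"
proof -
  have "map_poly (act1 w2 h) (tens f q) = tens f (act1 w2 h q)"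
    by (rule poly_eqI) (simp add: coeff_map_poly coeff_tens act1_smult)
  moreover have "Ag w1 g (tens f q') = tens (act1 w1 g f) q'" for q'
    unfolding Ag_def act1_def tens_sum1 by (simp add: coeff_tens tens_smult1)
  ultimately show ?thesis by (simp add: act2_fact)
qed

lemma act2_add: "act2 w1 w2 gh (P + Q) = act2 w1 w2 gh P + act2 w1 w2 gh Q"
proof -
  have "map_poly (act1 w2 (snd gh)) (P + Q) = map_poly (act1 w2 (snd gh)) P + map_poly (act1 w2 (snd gh)) Q"
    by (rule poly_eqI) (simp add: coeff_map_poly act1_add)
  moreover have "Ag w1 g (R + R') = Ag w1 g R + Ag w1 g R'" for g R R'
    unfolding Ag_def by (simp add: tens_add2 sum.distrib)
  ultimately show ?thesis by (cases gh) (simp add: act2_fact)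
qed

lemma act2_smult: "act2 w1 w2 gh (smult [:c:] P) = smult [:c:] (act2 w1 w2 gh P)"
proof -
  have "map_poly (act1 w2 (snd gh)) (smult [:c:] P) = smult [:c:] (map_poly (act1 w2 (snd gh)) P)"
    by (rule poly_eqI) (simp add: coeff_map_poly act1_smult)
  moreover have "Ag w1 g (smult [:c:] R) = smult [:c:] (Ag w1 g R)" for g R
    unfolding Ag_def by (simp add: tens_smult2 smult_sum_right)
  ultimately show ?thesis by (cases gh) (simp add: act2_fact)
qed

lemma act2_zero[simp]: "act2 w1 w2 gh 0 = 0"
  using act2_smult[of w1 w2 gh 0 0] by simp

lemma act2_minus: "act2 w1 w2 gh (- P) = - act2 w1 w2 gh P"
  using act2_smult[of w1 w2 gh "-1" P] by (simp add: smult_m1)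

lemma act2_diff: "act2 w1 w2 gh (P - Q) = act2 w1 w2 gh P - act2 w1 w2 gh Q"
  using act2_add[of w1 w2 gh P "-Q"] by (simp add: act2_minus)

lemma inV2_act2: "inV2 w1 w2 (act2 w1 w2 gh P)"
proof -
  obtain g h where gh: "gh = (g,h)" by (cases gh)
  have "degree (coeff (Ag w1 g (map_poly (act1 w2 h) P)) i) \<le> w2" for i
    unfolding coeff_Ag
    by (rule degree_sum_le) (auto intro: order.trans[OF degree_smult_le] simp: coeff_map_poly degree_act1)
  thus ?thesis unfolding inV2_def gh act2_fact using degree_Ag by auto
qed

lemma act2_mI1: "degree P \<le> w1 \<Longrightarrow> act2 w1 w2 (mI,h) P = map_poly (act1 w2 h) P"
  unfolding act2_fact by (rule Ag_mI) (rule order.trans[OF degree_map_poly_le], simp_all)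

lemma act2_mII: "inV2 w1 w2 P \<Longrightarrow> act2 w1 w2 (mI,mI) P = P"
  unfolding inV2_def
  by (subst act2_mI1) (auto intro!: poly_eqI simp: coeff_map_poly act1_mI)

lemma act2_negI1: "even w1 \<Longrightarrow> act2 w1 w2 ((-1,0,0,-1),h) P = act2 w1 w2 (mI,h) P"
  unfolding act2_fact by (rule Ag_negI)

lemma act2_negI2: assumes "even w2" shows "act2 w1 w2 (g,(-1,0,0,-1)) P = act2 w1 w2 (g,mI) P"
proof -
  have "act1 w2 (-1,0,0,-1) = act1 w2 mI" using act1_negI[of w2] \<open>even w2\<close> by (intro ext) (simp del: img.simps)
  thus ?thesis unfolding act2_fact by simp
qed



lemma smult_one_const[simp]: "smult [:1:] (P::'a::comm_ring_1 poly poly) = P"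
  by (rule poly_eqI) simp

lemma zg2_act_Nil[simp]: "zg2_act w1 w2 [] P = 0" unfolding zg2_act_def by simp
lemma zg2_act_Cons[simp]: "zg2_act w1 w2 ((n,g,h)#x) P = smult [:of_int n:] (act2 w1 w2 (g,h) P) + zg2_act w1 w2 x P"
  unfolding zg2_act_def by simp
lemma zg2_act_append[simp]: "zg2_act w1 w2 (x @ y) P = zg2_act w1 w2 x P + zg2_act w1 w2 y P"
  unfolding zg2_act_def by simp
lemma zg2_act_add: "zg2_act w1 w2 x (P + Q) = zg2_act w1 w2 x P + zg2_act w1 w2 x Q"
  by (induction x) (auto simp: act2_add smult_add_right)
lemma zg2_act_zero[simp]: "zg2_act w1 w2 x 0 = 0"
  by (induction x) auto
lemma zg2_act_smult: "zg2_act w1 w2 x (smult [:c:] P) = smult [:c:] (zg2_act w1 w2 x P)"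
  by (induction x) (auto simp: act2_smult smult_add_right mult.commute)

lemma act2_sum_list: "act2 w1 w2 gh (sum_list (map f xs)) = sum_list (map (\<lambda>x. act2 w1 w2 gh (f x)) xs)"
  by (induction xs) (auto simp: act2_add)

lemma zg2_act_map: "zg2_act w1 w2 (map (\<lambda>(n,h,h'). (m*n, mmul g h, mmul g' h')) y) P
   = smult [:of_int m:] (act2 w1 w2 (g,g') (zg2_act w1 w2 y P))"
proof (induction y)
  case (Cons a y)
  obtain n h h' where a: "a = (n,h,h')" by (cases a)
  have e: "smult [:of_int m * of_int n:] X = smult [:of_int m:] (smult [:of_int n:] X)" for X :: "rat poly poly"
    by (simp add: mult.commute)
  show ?case using Cons
    by (simp add: a act2_add act2_smult act2_comp smult_add_right e)
qed simp

lemma zg2_act_mult: "zg2_act w1 w2 (zg2_mult x y) P = zg2_act w1 w2 x (zg2_act w1 w2 y P)"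
  unfolding zg2_mult_def
  by (induction x) (auto simp: zg2_act_map)

lemma inV2_add: "inV2 w1 w2 P \<Longrightarrow> inV2 w1 w2 Q \<Longrightarrow> inV2 w1 w2 (P + Q)"
  unfolding inV2_def by (auto intro: degree_add_le)
lemma inV2_minus: "inV2 w1 w2 P \<Longrightarrow> inV2 w1 w2 (- P)"
  unfolding inV2_def by auto
lemma inV2_diff: "inV2 w1 w2 P \<Longrightarrow> inV2 w1 w2 Q \<Longrightarrow> inV2 w1 w2 (P - Q)"
  unfolding inV2_def by (auto intro: degree_diff_le)
lemma inV2_zero[simp]: "inV2 w1 w2 0"
  unfolding inV2_def by auto
lemma inV2_smult: "inV2 w1 w2 P \<Longrightarrow> inV2 w1 w2 (smult [:c:] P)"
  unfolding inV2_def by (auto intro: order.trans[OF degree_smult_le])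
lemma inV2_zg2_act: "inV2 w1 w2 (zg2_act w1 w2 x P)"
  by (induction x) (auto intro!: inV2_add inV2_smult inV2_act2)
lemma inV2_tens: "degree f \<le> w1 \<Longrightarrow> degree q \<le> w2 \<Longrightarrow> inV2 w1 w2 (tens f q)"
  unfolding inV2_def by (auto intro: order.trans[OF degree_tens] simp: degree_coeff_tens)

lemma lideal2_kill:
  assumes "\<forall>gen\<in>set gens. zg2_act w1 w2 gen P = 0" "length xs = length gens"
  shows "zg2_act w1 w2 (concat (map2 zg2_mult xs gens)) P = 0"
  using assms
proof (induction xs arbitrary: gens)
  case (Cons x xs)
  then obtain g gs where "gens = g # gs" by (cases gens) auto
  with Cons show ?case by (auto simp: zg2_act_mult)
qed simp

lemma mem_lideal2: "length xs = length gens \<Longrightarrow> \<forall>x\<in>set xs. zg2_ok x \<Longrightarrow> concat (map2 zg2_mult xs gens) \<in> lideal2 gens"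
  unfolding lideal2_def by blast

definition G1 :: zg2 where "G1 = zg_tens [(1,mI),(1,mS)] [(1,mI),(1,mS)]"
definition G2 :: zg2 where "G2 = [(1,mS,mS),(1,mS,mmul mU mS),(1,mmul mU mS,mmul mU mS),(1,mI,mU),(-1,mmul mU mU,mmul mU mU)]"
definition G3 :: zg2 where "G3 = zg2_mult (zg_tens [(1,mI),(1,mU),(1,mmul mU mU)] [(1,mI)]) DS"
definition G4 :: zg2 where "G4 = zg2_mult (zg_tens [(1,mI)] [(1,mI),(1,mU),(1,mmul mU mU)]) DS"

lemma W2_iff_gens: "P \<in> W2 w1 w2 \<longleftrightarrow> inV2 w1 w2 P \<and> zg2_act w1 w2 G1 P = 0 \<and> zg2_act w1 w2 G2 P = 0
   \<and> zg2_act w1 w2 G3 P = 0 \<and> zg2_act w1 w2 G4 P = 0"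
proof -
  have I2: "I2 = lideal2 [G1, G2, G3, G4]" unfolding I2_def G1_def G2_def G3_def G4_def ..
  have u: "zg2_act w1 w2 (zg2_mult [(1,mI,mI)] x) P = zg2_act w1 w2 x P" for x
    unfolding zg2_act_mult by (simp add: act2_mII inV2_zg2_act)
  have ok: "zg2_ok [(1,mI,mI)]" "zg2_ok []" by (auto simp: zg2_ok_def mI_SL2)
  have z: "zg2_mult [] x = []" for x by (simp add: zg2_mult_def)
  have m: "concat (map2 zg2_mult [[(1,mI,mI)],[],[],[]] [G1,G2,G3,G4]) \<in> I2"
          "concat (map2 zg2_mult [[],[(1,mI,mI)],[],[]] [G1,G2,G3,G4]) \<in> I2"
          "concat (map2 zg2_mult [[],[],[(1,mI,mI)],[]] [G1,G2,G3,G4]) \<in> I2"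
          "concat (map2 zg2_mult [[],[],[],[(1,mI,mI)]] [G1,G2,G3,G4]) \<in> I2"
    unfolding I2 by (rule mem_lideal2; auto simp: ok)+
  show ?thesis
  proof
    assume P: "P \<in> W2 w1 w2"
    hence "zg2_act w1 w2 (concat (map2 zg2_mult [[(1,mI,mI)],[],[],[]] [G1,G2,G3,G4])) P = 0"
      "zg2_act w1 w2 (concat (map2 zg2_mult [[],[(1,mI,mI)],[],[]] [G1,G2,G3,G4])) P = 0"
      "zg2_act w1 w2 (concat (map2 zg2_mult [[],[],[(1,mI,mI)],[]] [G1,G2,G3,G4])) P = 0"
      "zg2_act w1 w2 (concat (map2 zg2_mult [[],[],[],[(1,mI,mI)]] [G1,G2,G3,G4])) P = 0"
      using m unfolding W2_def by auto
    thus "inV2 w1 w2 P \<and> zg2_act w1 w2 G1 P = 0 \<and> zg2_act w1 w2 G2 P = 0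
      \<and> zg2_act w1 w2 G3 P = 0 \<and> zg2_act w1 w2 G4 P = 0"
      using P unfolding W2_def by (simp add: u z del: zg2_act_Cons)
  next
    assume H: "inV2 w1 w2 P \<and> zg2_act w1 w2 G1 P = 0 \<and> zg2_act w1 w2 G2 P = 0
      \<and> zg2_act w1 w2 G3 P = 0 \<and> zg2_act w1 w2 G4 P = 0"
    hence "zg2_act w1 w2 g P = 0" if "g \<in> I2" for g
      using that unfolding I2 lideal2_def by (auto intro!: lideal2_kill)
    thus "P \<in> W2 w1 w2" using H unfolding W2_def by auto
  qed
qed



lemma G1_eq: "inV2 w1 w2 P \<Longrightarrow> zg2_act w1 w2 G1 P = P + act2 w1 w2 (mI,mS) P + act2 w1 w2 (mS,mI) P + act2 w1 w2 (mS,mS) P"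
  by (simp add: G1_def zg_tens_def act2_mII add.assoc)

lemma G2_eq: "zg2_act w1 w2 G2 P = act2 w1 w2 (mS,mS) P + act2 w1 w2 (mS,mmul mU mS) P + act2 w1 w2 (mmul mU mS,mmul mU mS) P
   + act2 w1 w2 (mI,mU) P - act2 w1 w2 (mmul mU mU,mmul mU mU) P"
  by (simp add: G2_def smult_m1 add.assoc)

lemma DS_eq: "inV2 w1 w2 P \<Longrightarrow> zg2_act w1 w2 DS P = P + act2 w1 w2 (mS,mS) P"
  by (simp add: DS_def act2_mII)

lemma DU_eq: "inV2 w1 w2 P \<Longrightarrow> zg2_act w1 w2 DU P = P + act2 w1 w2 (mU,mU) P + act2 w1 w2 (mmul mU mU,mmul mU mU) P"
  by (simp add: DU_def act2_mII add.assoc)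

lemma G3_eq: "zg2_act w1 w2 G3 P = zg2_act w1 w2 DS P + act2 w1 w2 (mU,mI) (zg2_act w1 w2 DS P) + act2 w1 w2 (mmul mU mU,mI) (zg2_act w1 w2 DS P)"
  unfolding G3_def zg2_act_mult by (simp add: zg_tens_def act2_mII inV2_zg2_act add.assoc)

lemma G4_eq: "zg2_act w1 w2 G4 P = zg2_act w1 w2 DS P + act2 w1 w2 (mI,mU) (zg2_act w1 w2 DS P) + act2 w1 w2 (mI,mmul mU mU) (zg2_act w1 w2 DS P)"
  unfolding G4_def zg2_act_mult by (simp add: zg_tens_def act2_mII inV2_zg2_act add.assoc)

lemma X_pow: "monom 1 w = ([:0,1:]::rat poly)^w"
  by (simp add: monom_altdef)

lemma neg_lin_pow: "even w \<Longrightarrow> ([:0,-1:]::rat poly)^w = [:0,1:]^w"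
proof -
  assume "even w"
  have "([:0,-1:]::rat poly) = - [:0,1:]" by simp
  thus ?thesis using \<open>even w\<close> by (simp only: power_minus_even)
qed

lemma neg_lin_pow2: "even w \<Longrightarrow> ([:1,-1:]::rat poly)^w = [:-1,1:]^w"
proof -
  assume "even w"
  have "([:1,-1:]::rat poly) = - [:-1,1:]" by simp
  thus ?thesis using \<open>even w\<close> by (simp only: power_minus_even)
qed

lemma neg_one_pow: "even w \<Longrightarrow> ([:-1:]::rat poly)^w = 1"
proof -
  assume "even w"
  have "([:-1:]::rat poly) = - 1" by (rule poly_eqI) (simp add: coeff_pCons split: nat.split)
  thus ?thesis using \<open>even w\<close> by (simp only: power_minus_even power_one)
qed

lemma vals:
  assumes "even w"
  shows "act1 w mS 1 = monom 1 w" "act1 w mS (monom 1 w) = 1"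
    "act1 w mU 1 = monom 1 w" "act1 w mU (monom 1 w) = [:-1,1:]^w"
    "act1 w (mmul mU mU) 1 = [:-1,1:]^w" "act1 w (mmul mU mU) (monom 1 w) = 1"
    "act1 w (mmul mU mS) 1 = [:-1,1:]^w" "act1 w (mmul mU mS) (monom 1 w) = monom 1 w"
  using assms
  by (simp_all only: act1_one act1_monom[OF order.refl] smult_one)
     (simp_all add: mS_def mU_def X_pow neg_lin_pow neg_lin_pow2 neg_one_pow one_pCons[symmetric])

lemma vals_I: "act1 w mI 1 = 1" "act1 w mI (monom 1 w) = monom 1 w" "act1 w mI ([:-1,1:]^w) = [:-1,1:]^w"
  by (auto intro!: act1_mI simp: degree_monom_eq degree_lin_pow)



lemma W1_facts:
  assumes "B \<in> W1 w"
  shows "degree B \<le> w" "act1 w mS B = - B" "act1 w (mmul mU mU) B = - B - act1 w mU B"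
    "act1 w (mmul mU mS) B = - act1 w mU B" "act1 w mI B = B"
proof -
  have h: "degree B \<le> w" "act1 w mS B = - B" "B + act1 w mU B + act1 w (mmul mU mU) B = 0"
    using assms[unfolded W1_iff] by auto
  show d: "degree B \<le> w" and s: "act1 w mS B = - B" using h by auto
  from h(3) show "act1 w (mmul mU mU) B = - B - act1 w mU B"
    by (simp add: algebra_simps eq_neg_iff_add_eq_0)
  show "act1 w (mmul mU mS) B = - act1 w mU B"
    by (simp add: act1_comp[symmetric] s act1_minus)
  show "act1 w mI B = B" by (rule act1_mI[OF d])
qed

lemma mSS: "mmul mS mS = (-1,0,0,-1)" by (simp add: mS_def)

lemma degree_one_minus: "degree (1 - monom 1 w :: rat poly) \<le> w"
  by (rule order.trans[OF degree_diff_le]) (auto simp: degree_monom_eq)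

lemma tensB_W2:
  assumes "even w1" "even w2" "B \<in> W1 w1"
  shows "tens B 1 \<in> W2 w1 w2"
proof -
  note F = W1_facts[OF assms(3)]
  have iv: "inV2 w1 w2 (tens B 1)" by (rule inV2_tens) (use F in auto)
  have ds: "zg2_act w1 w2 DS (tens B 1) = tens B 1 - tens B (monom 1 w2)"
    by (simp add: DS_eq iv act2_tens F vals[OF assms(2)] tens_minus1)
  show ?thesis unfolding W2_iff_gens
    using iv
    by (simp add: G1_eq G2_eq G3_eq G4_eq ds act2_tens act2_add act2_diff act2_minus act1_add act1_diff act1_minus
       F vals[OF assms(1)] vals[OF assms(2)] vals_I tens_add1 tens_add2 tens_diff1 tens_diff2 tens_minus1 tens_minus2)
qed

lemma tensXA_W2:
  assumes "even w1" "even w2" "A \<in> W1 w2"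
  shows "tens (monom 1 w1) A \<in> W2 w1 w2"
proof -
  note F = W1_facts[OF assms(3)]
  have iv: "inV2 w1 w2 (tens (monom 1 w1) A)" by (rule inV2_tens) (use F in \<open>auto simp: degree_monom_eq\<close>)
  have ds: "zg2_act w1 w2 DS (tens (monom 1 w1) A) = tens (monom 1 w1) A - tens 1 A"
    by (simp add: DS_eq iv act2_tens F vals[OF assms(1)] tens_minus2)
  show ?thesis unfolding W2_iff_gens
    using iv
    by (simp add: G1_eq G2_eq G3_eq G4_eq ds act2_tens act2_add act2_diff act2_minus act1_add act1_diff act1_minus
       F vals[OF assms(1)] vals[OF assms(2)] vals_I tens_add1 tens_add2 tens_diff1 tens_diff2 tens_minus1 tens_minus2)
qed

lemma VID_W2:
  assumes "even w1" "even w2" "Q \<in> VID w1 w2"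
  shows "Q \<in> W2 w1 w2"
proof -
  have iv: "inV2 w1 w2 Q" and ds: "Q + act2 w1 w2 (mS,mS) Q = 0" and du: "zg2_act w1 w2 DU Q = 0"
    using assms(3) unfolding VID_def by (auto simp: DS_eq)
  have dz: "zg2_act w1 w2 DS Q = 0" using assms(3) unfolding VID_def by auto
  have "act2 w1 w2 (mI,mS) (Q + act2 w1 w2 (mS,mS) Q) = 0" by (simp add: ds)
  hence e1: "act2 w1 w2 (mI,mS) Q + act2 w1 w2 (mS,mI) Q = 0"
    by (simp add: act2_add act2_comp mSS act2_negI2[OF assms(2)])
  have "act2 w1 w2 (mI,mU) (Q + act2 w1 w2 (mS,mS) Q) = 0" by (simp add: ds)
  hence e2: "act2 w1 w2 (mI,mU) Q + act2 w1 w2 (mS,mmul mU mS) Q = 0"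
    by (simp add: act2_add act2_comp)
  have "act2 w1 w2 (mU,mU) (Q + act2 w1 w2 (mS,mS) Q) = 0" by (simp add: ds)
  hence e3: "act2 w1 w2 (mU,mU) Q + act2 w1 w2 (mmul mU mS,mmul mU mS) Q = 0"
    by (simp add: act2_add act2_comp)
  have g1: "zg2_act w1 w2 G1 Q = 0"
    using e1 ds by (simp add: G1_eq iv algebra_simps)
  have g2: "zg2_act w1 w2 G2 Q = 0"
  proof -
    have "zg2_act w1 w2 G2 Q = - zg2_act w1 w2 DU Q + (act2 w1 w2 (mI,mU) Q + act2 w1 w2 (mS,mmul mU mS) Q)
       + (act2 w1 w2 (mU,mU) Q + act2 w1 w2 (mmul mU mS,mmul mU mS) Q) + (Q + act2 w1 w2 (mS,mS) Q)"
      by (simp add: G2_eq DU_eq iv algebra_simps)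
    thus ?thesis using du e2 e3 ds by simp
  qed
  show ?thesis unfolding W2_iff_gens using iv g1 g2 dz by (simp add: G3_eq G4_eq)
qed

lemma VID_of:
  assumes "inV2 w1 w2 Q" "Q \<in> W2 w1 w2" "zg2_act w1 w2 DS Q = 0"
  shows "Q \<in> VID w1 w2"
proof -
  have ds: "Q + act2 w1 w2 (mS,mS) Q = 0" using assms(3) by (simp add: DS_eq assms(1))
  have "act2 w1 w2 (mI,mU) (Q + act2 w1 w2 (mS,mS) Q) = 0" by (simp add: ds)
  hence e2: "act2 w1 w2 (mI,mU) Q + act2 w1 w2 (mS,mmul mU mS) Q = 0"
    by (simp add: act2_add act2_comp)
  have "act2 w1 w2 (mU,mU) (Q + act2 w1 w2 (mS,mS) Q) = 0" by (simp add: ds)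
  hence e3: "act2 w1 w2 (mU,mU) Q + act2 w1 w2 (mmul mU mS,mmul mU mS) Q = 0"
    by (simp add: act2_add act2_comp)
  have g2: "zg2_act w1 w2 G2 Q = 0" using assms(2) unfolding W2_iff_gens by auto
  have "zg2_act w1 w2 G2 Q = - zg2_act w1 w2 DU Q + (act2 w1 w2 (mI,mU) Q + act2 w1 w2 (mS,mmul mU mS) Q)
       + (act2 w1 w2 (mU,mU) Q + act2 w1 w2 (mmul mU mS,mmul mU mS) Q) + (Q + act2 w1 w2 (mS,mS) Q)"
    by (simp add: G2_eq DU_eq assms(1) algebra_simps)
  hence "zg2_act w1 w2 DU Q = 0" using g2 e2 e3 ds by simp
  thus ?thesis unfolding VID_def using assms(1,3) by auto
qed



lemma zg2_act_minus: "zg2_act w1 w2 x (- P) = - zg2_act w1 w2 x P"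
  using zg2_act_smult[of w1 w2 x "-1" P] by (simp add: smult_m1)
lemma zg2_act_diff: "zg2_act w1 w2 x (P - Q) = zg2_act w1 w2 x P - zg2_act w1 w2 x Q"
  using zg2_act_add[of w1 w2 x P "-Q"] by (simp add: zg2_act_minus)

lemma W2_add: "P \<in> W2 w1 w2 \<Longrightarrow> Q \<in> W2 w1 w2 \<Longrightarrow> P + Q \<in> W2 w1 w2"
  unfolding W2_def by (auto simp: zg2_act_add intro: inV2_add)
lemma W2_minus: "P \<in> W2 w1 w2 \<Longrightarrow> - P \<in> W2 w1 w2"
  unfolding W2_def by (auto simp: zg2_act_minus intro: inV2_minus)
lemma W2_diff: "P \<in> W2 w1 w2 \<Longrightarrow> Q \<in> W2 w1 w2 \<Longrightarrow> P - Q \<in> W2 w1 w2"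
  using W2_add[OF _ W2_minus] by (metis diff_conv_add_uminus)

lemma W1_zero: "0 \<in> W1 w" by (simp add: W1_iff)
lemma W1_add: "P \<in> W1 w \<Longrightarrow> Q \<in> W1 w \<Longrightarrow> P + Q \<in> W1 w"
  by (auto simp: W1_iff act1_add intro: degree_add_le) (simp add: algebra_simps)?
lemma W1_smult: "P \<in> W1 w \<Longrightarrow> smult c P \<in> W1 w"
proof -
  assume "P \<in> W1 w"
  hence h: "degree P \<le> w" "act1 w mS P = - P" "P + act1 w mU P + act1 w (mmul mU mU) P = 0"
    unfolding W1_iff by auto
  have "smult c P + smult c (act1 w mU P) + smult c (act1 w (mmul mU mU) P) = 0" using h(3)
    by (metis smult_add_right smult_0_right)
  thus ?thesis using h unfolding W1_iff by (auto simp: act1_smult smult_add_right intro: order.trans[OF degree_smult_le])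
qed
lemma W1_minus: "P \<in> W1 w \<Longrightarrow> - P \<in> W1 w"
  using W1_smult[of P w "-1"] by simp

lemma rowp_add: "rowp w (P + Q) j = rowp w P j + rowp w Q j"
  by (rule poly_eqI) (simp add: coeff_rowp)
lemma rowp_minus: "rowp w (- P) j = - rowp w P j"
  by (rule poly_eqI) (simp add: coeff_rowp)
lemma rowp_zero: "rowp w 0 j = 0"
  by (rule poly_eqI) (simp add: coeff_rowp)

lemma rowp_act2: "inV2 w1 w2 R \<Longrightarrow> rowp w1 (act2 w1 w2 (g,mI) R) j = act1 w1 g (rowp w1 R j)"
proof -
  assume iv: "inV2 w1 w2 R"
  have "map_poly (act1 w2 mI) R = R"
    using iv unfolding inV2_def by (auto intro!: poly_eqI simp: coeff_map_poly act1_mI)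
  thus ?thesis by (simp add: act2_fact rowp_Ag)
qed

lemma coeff_act2: "inV2 w1 w2 R \<Longrightarrow> coeff (act2 w1 w2 (mI,h) R) i = act1 w2 h (coeff R i)"
  unfolding inV2_def by (simp add: act2_mI1 coeff_map_poly)

lemma decomp: "inV2 w1 w2 R \<Longrightarrow> R = (\<Sum>j\<le>w2. tens (rowp w1 R j) (monom 1 j))"
proof (rule poly_eqI, rule poly_eqI)
  fix i k assume iv: "inV2 w1 w2 R"
  have "coeff (coeff (\<Sum>j\<le>w2. tens (rowp w1 R j) (monom 1 j)) i) k
     = (if k \<le> w2 then coeff (rowp w1 R k) i else 0)"
  proof -
    have ifd: "(a::rat) * (if b then 1 else 0) = (if b then a else 0)" for a b by simp
    show ?thesis by (simp add: coeff_sum coeff_tens ifd sum.delta')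
  qed
  also have "\<dots> = coeff (coeff R i) k"
  proof (cases "k \<le> w2")
    case True
    then show ?thesis using iv unfolding inV2_def by (auto simp: coeff_rowp coeff_eq_0)
  next
    case False
    have "degree (coeff R i) \<le> w2" using iv unfolding inV2_def by auto
    hence "degree (coeff R i) < k" using False by linarith
    then show ?thesis using False by (simp add: coeff_eq_0)
  qed
  finally show "coeff (coeff R i) k = coeff (coeff (\<Sum>j\<le>w2. tens (rowp w1 R j) (monom 1 j)) i) k" ..
qed

lemma claim2:
  assumes "even w1" "even w2" "P \<in> W2 w1 w2"
  shows "zg2_act w1 w2 DS P \<in> tspan (W1 w1) (W1 w2)"
proof -
  define R where "R = zg2_act w1 w2 DS P"
  have ivP: "inV2 w1 w2 P" using assms(3) unfolding W2_def by auto
  have iv: "inV2 w1 w2 R" unfolding R_def by (rule inV2_zg2_act)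
  have g: "zg2_act w1 w2 G1 P = 0" "zg2_act w1 w2 G3 P = 0" "zg2_act w1 w2 G4 P = 0"
    using assms(3) unfolding W2_iff_gens by auto
  have R: "R = P + act2 w1 w2 (mS,mS) P" unfolding R_def by (simp add: DS_eq ivP)
  have g1: "P + act2 w1 w2 (mI,mS) P + act2 w1 w2 (mS,mI) P + act2 w1 w2 (mS,mS) P = 0"
    using g(1) by (simp add: G1_eq ivP)
  have aIS: "act2 w1 w2 (mI,mS) R = - R"
    using g1 unfolding R by (simp add: act2_add act2_comp mSS act2_negI2[OF assms(2)] act2_mII[OF ivP] algebra_simps eq_neg_iff_add_eq_0)
  have aSI: "act2 w1 w2 (mS,mI) R = - R"
    using g1 unfolding R by (simp add: act2_add act2_comp mSS act2_negI1[OF assms(1)] act2_mII[OF ivP] algebra_simps eq_neg_iff_add_eq_0)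
  have g3: "R + act2 w1 w2 (mU,mI) R + act2 w1 w2 (mmul mU mU,mI) R = 0"
    using g(2) unfolding G3_eq R_def .
  have g4: "R + act2 w1 w2 (mI,mU) R + act2 w1 w2 (mI,mmul mU mU) R = 0"
    using g(3) unfolding G4_eq R_def .
  have col: "coeff R i \<in> W1 w2" for i
  proof -
    have "coeff (R + act2 w1 w2 (mI,mU) R + act2 w1 w2 (mI,mmul mU mU) R) i = 0" using g4 by simp
    moreover have "coeff (act2 w1 w2 (mI,mS) R) i = coeff (- R) i" using aIS by simp
    ultimately show ?thesis using iv unfolding W1_iff inV2_def by (simp add: coeff_act2[OF iv])
  qed
  have row: "rowp w1 R j \<in> W1 w1" for j
  proof -
    have "rowp w1 (R + act2 w1 w2 (mU,mI) R + act2 w1 w2 (mmul mU mU,mI) R) j = 0" using g3 by (simp add: rowp_zero)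
    moreover have "rowp w1 (act2 w1 w2 (mS,mI) R) j = rowp w1 (- R) j" using aSI by simp
    ultimately show ?thesis unfolding W1_iff by (simp add: rowp_add rowp_minus rowp_act2[OF iv] degree_rowp)
  qed
  obtain \<pi> where \<pi>: "\<forall>x y. \<pi> (x + y) = \<pi> x + \<pi> y" "\<forall>c x. \<pi> (smult c x) = smult c (\<pi> x)"
     "\<forall>x. \<pi> x \<in> W1 w2" "\<forall>x\<in>W1 w2. \<pi> x = x"
    using proj_exists[of "W1 w2"] W1_zero W1_add W1_smult by blast
  have p0: "\<pi> 0 = 0" using \<pi>(2) by (metis smult_0_left)
  have psum: "\<pi> (\<Sum>j\<in>A. f j) = (\<Sum>j\<in>A. \<pi> (f j))" for A and f :: "nat \<Rightarrow> rat poly"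
    by (induction A rule: infinite_finite_induct) (auto simp: p0 \<pi>(1))
  have mp: "map_poly \<pi> R = R"
    by (rule poly_eqI) (simp add: coeff_map_poly p0 \<pi>(4) col)
  have "map_poly \<pi> (\<Sum>j\<le>w2. tens (rowp w1 R j) (monom 1 j)) = (\<Sum>j\<le>w2. tens (rowp w1 R j) (\<pi> (monom 1 j)))"
    by (rule poly_eqI) (simp add: coeff_map_poly p0 coeff_sum coeff_tens psum \<pi>(2))
  hence Req: "R = (\<Sum>j\<le>w2. tens (rowp w1 R j) (\<pi> (monom 1 j)))"
    using mp decomp[OF iv] by simp
  define l where "l = map (\<lambda>j. (rowp w1 R j, \<pi> (monom 1 j))) [0..<Suc w2]"
  have "set l \<subseteq> W1 w1 \<times> W1 w2" unfolding l_def using row \<pi>(3) by auto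
  moreover have "R = sum_list (map (\<lambda>(f,g). tens f g) l)"
  proof -
    have "sum_list (map (\<lambda>(f,g). tens f g) l) = sum_list (map (\<lambda>j. tens (rowp w1 R j) (\<pi> (monom 1 j))) [0..<Suc w2])"
      unfolding l_def by (simp add: comp_def)
    also have "\<dots> = (\<Sum>j\<in>set [0..<Suc w2]. tens (rowp w1 R j) (\<pi> (monom 1 j)))"
      by (rule sum_set_upt_conv_sum_list_nat[symmetric])
    also have "set [0..<Suc w2] = {..w2}" by auto
    finally show ?thesis using Req by simp
  qed
  ultimately show ?thesis unfolding R_def[symmetric] tspan_def by blast
qed



lemma collapse1:
  assumes "x \<in> tspan (E1 w) (W1 w')"
  shows "\<exists>A\<in>W1 w'. x = tens (1 - monom 1 w) A"
proof -
  obtain l where l: "set l \<subseteq> E1 w \<times> W1 w'" "x = sum_list (map (\<lambda>(f,g). tens f g) l)"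
    using assms unfolding tspan_def by blast
  have "set l \<subseteq> E1 w \<times> W1 w' \<Longrightarrow> \<exists>A\<in>W1 w'. sum_list (map (\<lambda>(f,g). tens f g) l) = tens (1 - monom 1 w) A"
  proof (induction l)
    case Nil
    then show ?case using W1_zero by (intro bexI[of _ 0]) auto
  next
    case (Cons a l)
    obtain f g where a: "a = (f,g)" by (cases a)
    from Cons obtain A where A: "A \<in> W1 w'" "sum_list (map (\<lambda>(f,g). tens f g) l) = tens (1 - monom 1 w) A" by auto
    from Cons.prems a obtain c where f: "f = smult c (1 - monom 1 w)" and g: "g \<in> W1 w'"
      unfolding E1_def by auto
    show ?case
      by (rule bexI[of _ "smult c g + A"], simp add: a f A tens_smult1 tens_add2, rule W1_add[OF W1_smult[OF g] A(1)])
  qed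
  thus ?thesis using l by auto
qed

lemma collapse2:
  assumes "x \<in> tspan (W1 w) (E1 w')"
  shows "\<exists>B\<in>W1 w. x = tens B (1 - monom 1 w')"
proof -
  obtain l where l: "set l \<subseteq> W1 w \<times> E1 w'" "x = sum_list (map (\<lambda>(f,g). tens f g) l)"
    using assms unfolding tspan_def by blast
  have "set l \<subseteq> W1 w \<times> E1 w' \<Longrightarrow> \<exists>B\<in>W1 w. sum_list (map (\<lambda>(f,g). tens f g) l) = tens B (1 - monom 1 w')"
  proof (induction l)
    case Nil
    then show ?case using W1_zero by (intro bexI[of _ 0]) auto
  next
    case (Cons a l)
    obtain f g where a: "a = (f,g)" by (cases a)
    from Cons obtain B where B: "B \<in> W1 w" "sum_list (map (\<lambda>(f,g). tens f g) l) = tens B (1 - monom 1 w')" by auto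
    from Cons.prems a obtain c where g: "g = smult c (1 - monom 1 w')" and f: "f \<in> W1 w"
      unfolding E1_def by auto
    show ?case
      by (rule bexI[of _ "smult c f + B"], simp add: a g B tens_smult1 tens_add1, rule W1_add[OF W1_smult[OF f] B(1)])
  qed
  thus ?thesis using l by auto
qed

lemma const_tens: "map_poly (\<lambda>c. [:c:]) B = tens B 1"
  by (rule poly_eqI) (simp add: coeff_map_poly coeff_tens)

lemma monom_tens: "monom R w = tens (monom 1 w) R"
  by (rule poly_eqI) (simp add: coeff_tens)

lemma DS_B: "even w2 \<Longrightarrow> B \<in> W1 w1 \<Longrightarrow> zg2_act w1 w2 DS (tens B 1) = tens B 1 - tens B (monom 1 w2)"
  using W1_facts[of B w1]
  by (simp add: DS_eq inV2_tens act2_tens vals tens_minus1)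

lemma DS_A: "even w1 \<Longrightarrow> A \<in> W1 w2 \<Longrightarrow> zg2_act w1 w2 DS (tens (monom 1 w1) A) = tens (monom 1 w1) A - tens 1 A"
  using W1_facts[of A w2]
  by (simp add: DS_eq inV2_tens degree_monom_eq act2_tens vals tens_minus2)

lemma E2_W2: "even w1 \<Longrightarrow> even w2 \<Longrightarrow> E2 w1 w2 \<subseteq> W2 w1 w2"
  unfolding E2_def const_tens monom_tens
  by (auto intro!: W2_add[OF W2_add[OF tensB_W2 VID_W2] tensXA_W2])

lemma W1_one_minus: "1 - monom 1 w \<in> E1 w"
  unfolding E1_def by (intro CollectI exI[of _ 1]) simp

theorem mainTheorem6:
  fixes w1 w2 :: nat
  assumes "even w1" "even w2" "w1 \<ge> 2" "w2 \<ge> 2"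
  shows "E2 w1 w2 \<subseteq> W2 w1 w2 \<and>
    (\<forall>P\<in>W2 w1 w2. zg2_act w1 w2 DS P \<in> tspan (W1 w1) (W1 w2)) \<and>
    {P \<in> W2 w1 w2. zg2_act w1 w2 DS P \<in> Kq w1 w2} = E2 w1 w2"
proof (intro conjI)
  show EW: "E2 w1 w2 \<subseteq> W2 w1 w2" by (rule E2_W2[OF assms(1,2)])
  show "\<forall>P\<in>W2 w1 w2. zg2_act w1 w2 DS P \<in> tspan (W1 w1) (W1 w2)"
    using claim2[OF assms(1,2)] by blast
  show "{P \<in> W2 w1 w2. zg2_act w1 w2 DS P \<in> Kq w1 w2} = E2 w1 w2"
  proof
    show "{P \<in> W2 w1 w2. zg2_act w1 w2 DS P \<in> Kq w1 w2} \<subseteq> E2 w1 w2"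
    proof
      fix P assume "P \<in> {P \<in> W2 w1 w2. zg2_act w1 w2 DS P \<in> Kq w1 w2}"
      hence P: "P \<in> W2 w1 w2" and K: "zg2_act w1 w2 DS P \<in> Kq w1 w2" by auto
      obtain x y where xy: "zg2_act w1 w2 DS P = x + y" "x \<in> tspan (E1 w1) (W1 w2)" "y \<in> tspan (W1 w1) (E1 w2)"
        using K unfolding Kq_def by blast
      obtain A where A: "A \<in> W1 w2" "x = tens (1 - monom 1 w1) A" using collapse1[OF xy(2)] by blast
      obtain B where B: "B \<in> W1 w1" "y = tens B (1 - monom 1 w2)" using collapse2[OF xy(3)] by blast
      define P' where "P' = P - tens B 1 + tens (monom 1 w1) A"
      have P'W: "P' \<in> W2 w1 w2" unfolding P'_def
        by (intro W2_add W2_diff P tensB_W2 tensXA_W2 assms(1,2) A(1) B(1))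
      hence ivP': "inV2 w1 w2 P'" unfolding W2_def by auto
      have "zg2_act w1 w2 DS P' = 0"
        unfolding P'_def zg2_act_add zg2_act_diff DS_B[OF assms(2) B(1)] DS_A[OF assms(1) A(1)] xy(1) A(2) B(2)
        by (simp add: tens_diff1 tens_diff2)
      hence "P' \<in> VID w1 w2" by (rule VID_of[OF ivP' P'W])
      moreover have "P = map_poly (\<lambda>c. [:c:]) B + P' + monom (- A) w1"
        unfolding const_tens monom_tens P'_def by (simp add: tens_minus2)
      moreover have "- A \<in> W1 w2" by (rule W1_minus[OF A(1)])
      ultimately show "P \<in> E2 w1 w2" unfolding E2_def using B(1) by blast
    qed
  next
    show "E2 w1 w2 \<subseteq> {P \<in> W2 w1 w2. zg2_act w1 w2 DS P \<in> Kq w1 w2}"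
    proof
      fix P assume PE: "P \<in> E2 w1 w2"
      then obtain B Q R where BQR: "P = tens B 1 + Q + tens (monom 1 w1) R" "B \<in> W1 w1" "Q \<in> VID w1 w2" "R \<in> W1 w2"
        unfolding E2_def const_tens monom_tens by blast
      have dq: "zg2_act w1 w2 DS Q = 0" using BQR(3) unfolding VID_def by auto
      have ds: "zg2_act w1 w2 DS P = tens (1 - monom 1 w1) (- R) + tens B (1 - monom 1 w2)"
        unfolding BQR(1) zg2_act_add dq DS_B[OF assms(2) BQR(2)] DS_A[OF assms(1) BQR(4)]
        by (simp add: tens_diff1 tens_diff2 tens_minus2)
      have x: "tens (1 - monom 1 w1) (- R) \<in> tspan (E1 w1) (W1 w2)"
        unfolding tspan_def
        by (intro CollectI exI[of _ "[(1 - monom 1 w1, - R)]"]) (auto simp: W1_one_minus W1_minus BQR(4))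
      have y: "tens B (1 - monom 1 w2) \<in> tspan (W1 w1) (E1 w2)"
        unfolding tspan_def
        by (intro CollectI exI[of _ "[(B, 1 - monom 1 w2)]"]) (auto simp: W1_one_minus BQR(2))
      have "zg2_act w1 w2 DS P \<in> Kq w1 w2" unfolding Kq_def ds using x y by blast
      thus "P \<in> {P \<in> W2 w1 w2. zg2_act w1 w2 DS P \<in> Kq w1 w2}" using EW PE by auto
    qed
  qed
qed


end
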